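(* Let $\beta\in\mathbb{C}$ and $N\geq2$ with $\beta^N=1$ and $\beta^k\neq1$ for $k=1,\dots,N-1$. Let $m\in\mathrm{Hol}(\mathbb{D})$, $m\not\equiv0$, and $T:\mathrm{Hol}(\mathbb{D})\to\mathrm{Hol}(\mathbb{D})$ given by $(Tf)(z)=m(z)f(\beta z)$. If $m(z_0)=0$ for some $z_0\in\mathbb{D}$, then $\sigma_p(T)=\emptyset$.
   Context: $\mathbb{D}$ is the open unit disc, $\mathrm{Hol}(\mathbb{D})$ the space of holomorphic functions on $\mathbb{D}$. $\sigma_p(T)$ is the set of $\lambda\in\mathbb{C}$ such that $\lambda\mathrm{Id}-T$ is not injective. *)

theory Defs
  imports "HOL-Complex_Analysis.Complex_Analysis"
begin

text \<open>Hol(D): functions holomorphic on the open unit disc. Elements are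
  identified when they agree on the disc.\<close>
definition Hol_D :: "(complex \<Rightarrow> complex) set" where
  "Hol_D = {f. f holomorphic_on ball 0 1}"

definition wcomp_op :: "(complex \<Rightarrow> complex) \<Rightarrow> complex \<Rightarrow> (complex \<Rightarrow> complex) \<Rightarrow> (complex \<Rightarrow> complex)" where
  "wcomp_op m \<beta> f = (\<lambda>z. m z * f (\<beta> * z))"

definition point_spectrum_Hol_D :: "((complex \<Rightarrow> complex) \<Rightarrow> (complex \<Rightarrow> complex)) \<Rightarrow> complex set" where
  "point_spectrum_Hol_D T = {c. \<exists>f \<in> Hol_D. (\<exists>z \<in> ball 0 1. f z \<noteq> 0) \<and>
       (\<forall>z \<in> ball 0 1. c * f z - T f z = 0)}"

end

theory Submission
  imports Defs
begin

lemma prod_zero_disc: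
  fixes f g :: "complex \<Rightarrow> complex"
  assumes f: "continuous_on (ball 0 1) f" and g: "g holomorphic_on ball 0 1"
    and fg: "\<forall>z\<in>ball 0 1. f z * g z = 0"
    and w: "w \<in> ball 0 1" "f w \<noteq> 0"
    and z: "z \<in> ball 0 1"
  shows "g z = 0"
proof -
  define S where "S = ball 0 1 \<inter> f -` (-{0})"
  have oS: "open S" unfolding S_def
    by (rule continuous_open_preimage[OF f]) auto
  have "w \<in> S" using w unfolding S_def by auto
  show ?thesis
  proof (rule analytic_continuation_open[where f = g and g = "\<lambda>_. 0" and s = S and s' = "ball 0 1"])
    show "S \<noteq> {}" using \<open>w \<in> S\<close> by auto
    show "\<And>z. z \<in> S \<Longrightarrow> g z = 0" using fg unfolding S_def by auto
  qed (use oS g z in \<open>auto simp: S_def\<close>)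
qed

theorem proposition3p3:
  fixes \<beta> :: complex and N :: nat and m :: "complex \<Rightarrow> complex" and z0 :: complex
  assumes "N \<ge> 2"
    and "\<beta> ^ N = 1"
    and "\<forall>k\<in>{1..N-1}. \<beta> ^ k \<noteq> 1"
    and "m \<in> Hol_D"
    and "\<exists>z \<in> ball 0 1. m z \<noteq> 0"
    and "z0 \<in> ball 0 1" and "m z0 = 0"
  shows "point_spectrum_Hol_D (wcomp_op m \<beta>) = {}"
proof (rule ccontr)
  assume "point_spectrum_Hol_D (wcomp_op m \<beta>) \<noteq> {}"
  then obtain c f where fH: "f holomorphic_on ball 0 1" and w: "\<exists>z \<in> ball 0 1. f z \<noteq> 0"
    and eq: "\<forall>z \<in> ball 0 1. c * f z - m z * f (\<beta> * z) = 0"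
    unfolding point_spectrum_Hol_D_def wcomp_op_def Hol_D_def by auto
  have mH: "m holomorphic_on ball 0 1" using assms(4) by (simp add: Hol_D_def)
  have nb: "norm \<beta> = 1" using power_eq_1_iff[OF assms(2)] assms(1) by auto
  have inb: "\<beta> ^ j * z \<in> ball 0 1" if "z \<in> ball 0 1" for j z
    using that nb by (simp add: norm_mult norm_power)
  obtain w0 where w0: "w0 \<in> ball 0 1" "f w0 \<noteq> 0" using w by auto
  show False
  proof (cases "c = 0")
    case True
    obtain u where u: "u \<in> ball 0 1" "m u \<noteq> 0" using assms(5) by auto
    have cm: "continuous_on (ball 0 1) m" using mH holomorphic_on_imp_continuous_on by blast
    have fbH: "(\<lambda>z. f (\<beta> * z)) holomorphic_on ball 0 1"
    proof -
      have "(f \<circ> (\<lambda>z. \<beta> * z)) holomorphic_on ball 0 1"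
        by (rule holomorphic_on_compose_gen[OF _ fH]) (use inb[of _ 1] in \<open>auto intro!: holomorphic_intros\<close>)
      thus ?thesis by (simp add: o_def)
    qed
    have "f (\<beta> * (w0 / \<beta>)) = 0"
      apply (rule prod_zero_disc[OF cm fbH _ u])
      using eq True nb w0 by (auto simp: norm_divide)
    moreover have "\<beta> \<noteq> 0" using nb by auto
    ultimately show False using w0 by simp
  next
    case False
    define M where "M z = (\<Prod>j<N. m (\<beta> ^ j * z))" for z
    have iter: "c ^ k * f z = (\<Prod>j<k. m (\<beta> ^ j * z)) * f (\<beta> ^ k * z)"
      if z: "z \<in> ball 0 1" for k z
    proof (induction k)
      case 0 then show ?case by simp
    next
      case (Suc k)
      have e: "c * f (\<beta> ^ k * z) = m (\<beta> ^ k * z) * f (\<beta> * (\<beta> ^ k * z))"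
        using eq inb[OF z, of k] by auto
      have "c ^ Suc k * f z = c * (c ^ k * f z)" by simp
      also have "\<dots> = (\<Prod>j<k. m (\<beta> ^ j * z)) * (c * f (\<beta> ^ k * z))"
        using Suc by (simp add: algebra_simps)
      also have "\<dots> = (\<Prod>j<Suc k. m (\<beta> ^ j * z)) * f (\<beta> ^ Suc k * z)"
        using e by (simp add: algebra_simps)
      finally show ?case .
    qed
    have MH: "M holomorphic_on ball 0 1"
      unfolding M_def
    proof (rule holomorphic_on_prod)
      fix j
      have "(m \<circ> (\<lambda>z. \<beta> ^ j * z)) holomorphic_on ball 0 1"
        by (rule holomorphic_on_compose_gen[OF _ mH]) (use inb in \<open>auto intro!: holomorphic_intros\<close>)
      thus "(\<lambda>z. m (\<beta> ^ j * z)) holomorphic_on ball 0 1" by (simp add: o_def)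
    qed
    have gc: "continuous_on (ball 0 1) (\<lambda>z. c ^ N - M z)"
      using MH holomorphic_on_imp_continuous_on by (auto intro!: continuous_intros)
    have prod0: "\<forall>z\<in>ball 0 1. (c ^ N - M z) * f z = 0"
      using iter[of _ N] assms(2) by (auto simp: M_def algebra_simps)
    have M0: "M z0 = 0"
      unfolding M_def using assms(1,7) by (intro prod_zero) (auto intro!: bexI[of _ 0])
    have "f w0 = 0"
      by (rule prod_zero_disc[OF gc fH prod0 assms(6)]) (use M0 False w0 in auto)
    thus False using w0 by simp
  qed
qed

end
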